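(* Let $\mathcal{H}$ be a real Hilbert space, $x^*\in\mathcal{H}$, $U$ an open neighborhood of $x^*$, and $f:U\to\mathcal{H}$ a continuously (Fréchet) differentiable map on $U$ such that $f'(x^* )$ is invertible (a bijective bounded linear operator) and the equation $f(x)=0$ has a solution in $U$. Define $v:\mathcal{H}\to\mathcal{H}$ by $v(x)=f'(x^* )x$. Then the pair $(f,v)$ is locally strongly monotone: there exist $\varepsilon>0$ with $B(x^*,\varepsilon)\subset U$ and $\alpha>0$ such that for all $x,y\in B(x^*,\varepsilon)$, \[ \langle f(x)-f(y),\, v(x)-v(y)\rangle\ \ge\ \alpha\|x-y\|^2 . \]
   Context: $B(x^*,\varepsilon)$ denotes the ball of center $x^*$ and radius $\varepsilon$ in $\mathcal{H}$. *)

theory Defs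
  imports "HOL-Analysis.Analysis"
begin

end

theory Submission
  imports Defs
begin

lemma baire_step:
  fixes A :: "'a::{real_normed_vector,complete_space} \<Rightarrow> 'b::{real_normed_vector,complete_space}"
  assumes "surj A"
  shows "\<exists>n::nat. \<exists>y0 r. r > 0 \<and> ball y0 r \<subseteq> closure (A ` cball 0 (real n))"
proof (rule ccontr)
  assume H: "\<not> ?thesis"
  define T where "T n = closure (A ` cball 0 (real n))" for n
  have "Met_TC.mtopology interior_of \<Union>(range T) = {}"
  proof (rule Met_TC.metric_Baire_category_alt)
    show "Met_TC.mcomplete TYPE('b)" using complete_UNIV by simp
    show "countable (range T)" by simp
    fix S assume "S \<in> range T"
    then obtain n where S: "S = T n" by auto
    show "closedin Met_TC.mtopology S \<and> Met_TC.mtopology interior_of S = {}"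
    proof
      show "closedin Met_TC.mtopology S" unfolding S T_def by simp
      show "Met_TC.mtopology interior_of S = {}"
      proof (rule ccontr)
        assume "Met_TC.mtopology interior_of S \<noteq> {}"
        then obtain y0 O' where "open O'" "y0 \<in> O'" "O' \<subseteq> S"
          by (auto simp: interior_of_def)
        then obtain r where r: "r > 0" "ball y0 r \<subseteq> S" by (meson open_contains_ball subset_trans)
        then have "ball y0 r \<subseteq> closure (A ` cball 0 (real n))" using S by (simp add: T_def)
        with r(1) have "\<exists>n::nat. \<exists>y0 r. r > 0 \<and> ball y0 r \<subseteq> closure (A ` cball 0 (real n))" by blast
        with H show False by (rule notE)
      qed
    qed
  qed
  moreover have "\<Union>(range T) = UNIV"
  proof safe
    fix y :: 'b
    obtain x where "y = A x" using assms by (metis surjD)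
    have "x \<in> cball 0 (real (nat \<lceil>norm x\<rceil>))" by (simp add: real_nat_ceiling_ge)
    then have "y \<in> A ` cball 0 (real (nat \<lceil>norm x\<rceil>))" using \<open>y = A x\<close> by (rule rev_image_eqI)
    then have "y \<in> T (nat \<lceil>norm x\<rceil>)" unfolding T_def by (rule closure_subset[THEN subsetD])
    then show "y \<in> \<Union>(range T)" by blast
  qed simp
  ultimately show False by simp
qed

lemma approx_step:
  fixes A :: "'a::{real_normed_vector,complete_space} \<Rightarrow> 'b::{real_normed_vector,complete_space}"
  assumes lin: "linear A" and sub: "ball y0 r \<subseteq> closure (A ` cball 0 M)" and r: "r > 0"
    and that: "norm z < r" "e > 0"
  shows "\<exists>x. norm x \<le> 2 * M \<and> norm (A x - z) < e"
proof -
  have "y0 + z \<in> ball y0 r" "y0 \<in> ball y0 r" using that r by (auto simp: dist_norm)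
  then have c1: "y0 + z \<in> closure (A ` cball 0 M)" and c2: "y0 \<in> closure (A ` cball 0 M)"
    using sub by auto
  obtain a where a: "a \<in> cball 0 M" "dist (A a) (y0 + z) < e/2"
    using c1 \<open>e > 0\<close> unfolding closure_approachable by (metis half_gt_zero imageE)
  obtain b where b: "b \<in> cball 0 M" "dist (A b) y0 < e/2"
    using c2 \<open>e > 0\<close> unfolding closure_approachable by (metis half_gt_zero imageE)
  have "norm (a - b) \<le> norm a + norm b" by (rule norm_triangle_ineq4)
  also have "\<dots> \<le> 2 * M" using a(1) b(1) by simp
  finally have n: "norm (a - b) \<le> 2 * M" .
  have "A (a - b) - z = (A a - (y0 + z)) - (A b - y0)" using linear_diff[OF lin] by simp
  then have "norm (A (a - b) - z) \<le> norm (A a - (y0 + z)) + norm (A b - y0)"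
    by (metis norm_triangle_ineq4)
  also have "\<dots> < e" using a(2) b(2) by (simp add: dist_norm)
  finally show ?thesis using n by blast
qed

lemma approx_scaled:
  fixes A :: "'a::{real_normed_vector,complete_space} \<Rightarrow> 'b::{real_normed_vector,complete_space}"
  assumes lin: "linear A" and sub: "ball y0 r \<subseteq> closure (A ` cball 0 M)" and r: "r > 0"
  shows "\<exists>K>0. \<forall>z. \<exists>x. norm x \<le> K * norm z \<and> norm (A x - z) \<le> norm z / 2"
proof -
  have M: "M \<ge> 0"
  proof (rule ccontr)
    assume "\<not> M \<ge> 0"
    then have "cball (0::'a) M = {}" by simp
    moreover have "y0 \<in> ball y0 r" using r by simp
    ultimately show False using sub by simp
  qed
  define K where "K = 4 * M / r + 1"
  have K: "K > 0" using M r by (simp add: K_def add_nonneg_pos)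
  have "\<exists>x. norm x \<le> K * norm z \<and> norm (A x - z) \<le> norm z / 2" for z
  proof (cases "z = 0")
    case True then show ?thesis by (intro exI[of _ 0]) (simp add: linear_0[OF lin])
  next
    case False
    define t where "t = r / (2 * norm z)"
    have t: "t > 0" using False r by (simp add: t_def)
    have "norm (t *\<^sub>R z) < r" using False r by (simp add: t_def)
    moreover have "t * (norm z / 2) > 0" using t False by simp
    ultimately obtain x where x: "norm x \<le> 2 * M" "norm (A x - t *\<^sub>R z) < t * (norm z / 2)"
      using approx_step[OF lin sub r] by blast
    define x' where "x' = (1/t) *\<^sub>R x"
    have "A x' - z = (1/t) *\<^sub>R (A x - t *\<^sub>R z)" using t
      by (simp add: x'_def linear_scale[OF lin] algebra_simps)
    then have "norm (A x' - z) = (1/t) * norm (A x - t *\<^sub>R z)" using t by simp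
    also have "\<dots> \<le> norm z / 2" using x(2) t by (simp add: field_simps)
    finally have e: "norm (A x' - z) \<le> norm z / 2" .
    have "norm x' = norm x / t" using t by (simp add: x'_def)
    also have "\<dots> \<le> 2 * M / t" using x(1) t by (simp add: divide_right_mono)
    also have "\<dots> = (4 * M / r) * norm z" using False r by (simp add: t_def field_simps)
    also have "\<dots> \<le> K * norm z" by (simp add: K_def distrib_right)
    finally show ?thesis using e by blast
  qed
  then show ?thesis using K by blast
qed

lemma my_norm_cancel:
  fixes f :: "nat \<Rightarrow> 'a::{real_normed_vector,complete_space}"
  assumes sn: "summable (\<lambda>n. norm (f n))"
  shows "summable f"
proof -
  define T where "T n = (\<Sum>k<n. norm (f k))" for n
  define S where "S n = (\<Sum>k<n. f k)" for n
  have "convergent T" using sn unfolding T_def by (simp add: summable_iff_convergent)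
  then have C: "Cauchy T" by (rule convergent_Cauchy)
  have le: "dist (S m) (S n) \<le> dist (T m) (T n)" if "n \<le> m" for m n
  proof -
    have e1: "S m = S n + sum f {n..<m}" unfolding S_def lessThan_atLeast0
      using sum.atLeastLessThan_concat[of 0 n m f] that by simp
    have e2: "T m = T n + (\<Sum>k\<in>{n..<m}. norm (f k))" unfolding T_def lessThan_atLeast0
      using sum.atLeastLessThan_concat[of 0 n m "\<lambda>k. norm (f k)"] that by simp
    have d1: "dist (S m) (S n) = norm (sum f {n..<m})" unfolding dist_norm e1 by simp
    have "(\<Sum>k\<in>{n..<m}. norm (f k)) \<ge> 0" by (rule sum_nonneg) simp
    then have d2: "dist (T m) (T n) = (\<Sum>k\<in>{n..<m}. norm (f k))" unfolding dist_real_def e2 by simp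
    show ?thesis unfolding d1 d2 by (rule norm_sum)
  qed
  have le2: "dist (S m) (S n) \<le> dist (T m) (T n)" for m n
  proof (cases "n \<le> m")
    case True then show ?thesis by (rule le)
  next
    case False
    then have "dist (S n) (S m) \<le> dist (T n) (T m)" by (intro le) simp
    then show ?thesis by (metis dist_commute)
  qed
  have "Cauchy S"
  proof (rule metric_CauchyI)
    fix e :: real assume "e > 0"
    then obtain M where M: "\<And>m n. m \<ge> M \<Longrightarrow> n \<ge> M \<Longrightarrow> dist (T m) (T n) < e"
      using C metric_CauchyD by blast
    show "\<exists>M. \<forall>m\<ge>M. \<forall>n\<ge>M. dist (S m) (S n) < e"
    proof (intro exI[of _ M] allI impI)
      fix m n assume mn: "m \<ge> M" "n \<ge> M"
      have "dist (S m) (S n) \<le> dist (T m) (T n)" by (rule le2)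
      also have "\<dots> < e" using mn by (rule M)
      finally show "dist (S m) (S n) < e" .
    qed
  qed
  then have "convergent S" by (rule Cauchy_convergent)
  then show ?thesis unfolding S_def by (simp add: summable_iff_convergent)
qed

lemma my_summable_norm:
  fixes f :: "nat \<Rightarrow> 'a::{real_normed_vector,complete_space}"
  assumes sn: "summable (\<lambda>n. norm (f n))"
  shows "norm (suminf f) \<le> (\<Sum>n. norm (f n))"
proof -
  have s: "summable f" by (rule my_norm_cancel[OF sn])
  have a0: "(\<lambda>n. \<Sum>k<n. f k) \<longlonglongrightarrow> suminf f" by (rule summable_LIMSEQ[OF s])
  have a: "(\<lambda>n. norm (\<Sum>k<n. f k)) \<longlonglongrightarrow> norm (suminf f)" by (rule tendsto_norm[OF a0])
  have b: "(\<lambda>n. \<Sum>k<n. norm (f k)) \<longlonglongrightarrow> (\<Sum>n. norm (f n))" by (rule summable_LIMSEQ[OF sn])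
  have c: "\<exists>N. \<forall>n\<ge>N. norm (\<Sum>k<n. f k) \<le> (\<Sum>k<n. norm (f k))"
    using norm_sum by blast
  show ?thesis by (rule LIMSEQ_le[OF a b c])
qed

lemma exact_solve:
  fixes A :: "'a::{real_normed_vector,complete_space} \<Rightarrow> 'b::{real_normed_vector,complete_space}"
  assumes bl: "bounded_linear A" and K: "K > 0"
    and approx: "\<forall>z. \<exists>x. norm x \<le> K * norm z \<and> norm (A x - z) \<le> norm z / 2"
  shows "\<exists>x. A x = y \<and> norm x \<le> 2 * K * norm y"
proof -
  define g where "g z = (SOME x. norm x \<le> K * norm z \<and> norm (A x - z) \<le> norm z / 2)" for z
  have g: "norm (g z) \<le> K * norm z \<and> norm (A (g z) - z) \<le> norm z / 2" for z
    unfolding g_def using approx by (metis (mono_tags, lifting) someI_ex)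
  define Y where "Y k = ((\<lambda>z. z - A (g z)) ^^ k) y" for k
  have Ys: "Y (Suc k) = Y k - A (g (Y k))" for k by (simp add: Y_def)
  have Yb: "norm (Y k) \<le> norm y * (1/2)^k" for k
  proof (induction k)
    case 0 then show ?case by (simp add: Y_def)
  next
    case (Suc k)
    have "norm (Y (Suc k)) = norm (A (g (Y k)) - Y k)" by (simp add: Ys norm_minus_commute)
    also have "\<dots> \<le> norm (Y k) / 2" using g by blast
    also have "\<dots> \<le> norm y * (1/2)^(Suc k)" using Suc by simp
    finally show ?case .
  qed
  define xk where "xk k = g (Y k)" for k
  have xb: "norm (xk k) \<le> K * norm y * (1/2)^k" for k
  proof -
    have "norm (xk k) \<le> K * norm (Y k)" using g by (simp add: xk_def)
    also have "\<dots> \<le> K * (norm y * (1/2)^k)" using Yb K by (simp add: mult_left_mono)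
    finally show ?thesis by simp
  qed
  have sg: "summable (\<lambda>k. K * norm y * (1/2::real)^k)"
    by (intro summable_mult summable_geometric) simp
  have sn: "summable (\<lambda>k. norm (xk k))"
    by (rule summable_comparison_test[OF _ sg]) (use xb in auto)
  have sx: "summable xk" using my_norm_cancel[OF sn] .
  have "norm (suminf xk) \<le> (\<Sum>k. norm (xk k))" using my_summable_norm[OF sn] .
  also have "\<dots> \<le> (\<Sum>k. K * norm y * (1/2::real)^k)"
    by (rule suminf_le[OF _ sn sg]) (use xb in auto)
  also have "\<dots> = K * norm y * (\<Sum>k. (1/2::real)^k)"
    by (rule suminf_mult) (rule summable_geometric, simp)
  also have "\<dots> = 2 * K * norm y" by (simp add: suminf_geometric)
  finally have nb: "norm (suminf xk) \<le> 2 * K * norm y" .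
  have s1: "(\<lambda>k. A (xk k)) sums A (suminf xk)"
    using bounded_linear.sums[OF bl summable_sums[OF sx]] .
  have Y0: "Y \<longlonglongrightarrow> 0"
  proof (rule Lim_null_comparison)
    show "\<forall>\<^sub>F k in sequentially. norm (Y k) \<le> norm y * (1/2)^k" using Yb by simp
    show "(\<lambda>k. norm y * (1/2::real)^k) \<longlonglongrightarrow> 0"
      by (intro tendsto_mult_right_zero LIMSEQ_realpow_zero) auto
  qed
  have "(\<lambda>n. \<Sum>k<n. A (xk k)) = (\<lambda>n. Y 0 - Y n)"
  proof
    fix n
    have "(\<Sum>k<n. A (xk k)) = (\<Sum>k<n. Y k - Y (Suc k))" by (simp add: Ys xk_def)
    then show "(\<Sum>k<n. A (xk k)) = Y 0 - Y n" by (simp add: sum_lessThan_telescope')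
  qed
  moreover have "(\<lambda>n. Y 0 - Y n) \<longlonglongrightarrow> Y 0 - 0" by (intro tendsto_intros Y0)
  ultimately have s2: "(\<lambda>k. A (xk k)) sums y" by (simp add: sums_def Y_def)
  have "A (suminf xk) = y" using sums_unique2[OF s1 s2] .
  then show ?thesis using nb by blast
qed

lemma bounded_below:
  fixes A :: "'a::{real_normed_vector,complete_space} \<Rightarrow> 'b::{real_normed_vector,complete_space}"
  assumes bl: "bounded_linear A" and b: "bij A"
  shows "\<exists>c>0. \<forall>x. c * norm x \<le> norm (A x)"
proof -
  have lin: "linear A" using bl bounded_linear.linear by blast
  obtain n y0 r where r: "r > 0" "ball y0 r \<subseteq> closure (A ` cball 0 (real n))"
    using baire_step[of A] b bij_is_surj by blast
  obtain K where K: "K > 0" "\<forall>z. \<exists>x. norm x \<le> K * norm z \<and> norm (A x - z) \<le> norm z / 2"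
    using approx_scaled[OF lin r(2) r(1)] by blast
  have "(1 / (2 * K)) * norm x \<le> norm (A x)" for x
  proof -
    obtain x' where x': "A x' = A x" "norm x' \<le> 2 * K * norm (A x)"
      using exact_solve[OF bl K(1) K(2)] by blast
    have "x' = x" using x'(1) b by (meson bij_is_inj injD)
    then show ?thesis using x' K(1) by (simp add: field_simps)
  qed
  moreover have "1 / (2 * K) > 0" using K by simp
  ultimately show ?thesis by blast
qed

lemma lbx:
  fixes f :: "'a::{real_inner,complete_space} \<Rightarrow> 'a"
    and f' :: "'a \<Rightarrow> 'a \<Rightarrow>\<^sub>L 'a"
  assumes deriv: "\<And>z. z \<in> ball xs e \<Longrightarrow> (f has_derivative blinfun_apply (f' z)) (at z)"
    and d: "\<And>z. z \<in> ball xs e \<Longrightarrow> norm (f' z - f' xs) \<le> D"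
    and x: "x \<in> ball xs e" and y: "y \<in> ball xs e"
  shows "norm (f x - f y - blinfun_apply (f' xs) (x - y)) \<le> norm (x - y) * D"
proof (rule differentiable_bound_linearization[where S="ball xs e" and f'="\<lambda>z. blinfun_apply (f' z)"])
  fix t :: real assume t: "t \<in> {0..1}"
  have "(1 - t) *\<^sub>R y + t *\<^sub>R x \<in> ball xs e"
    using convex_ball[of xs e] x y t unfolding convex_alt by auto
  moreover have "(1 - t) *\<^sub>R y + t *\<^sub>R x = y + t *\<^sub>R (x - y)" by (simp add: algebra_simps)
  ultimately show "y + t *\<^sub>R (x - y) \<in> ball xs e" by simp
next
  fix z assume "z \<in> ball xs e"
  then show "(f has_derivative blinfun_apply (f' z)) (at z within ball xs e)"
    using deriv has_derivative_at_withinI by blast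
next
  fix z assume z: "z \<in> ball xs e"
  have "onorm (blinfun_apply (f' z) - blinfun_apply (f' xs)) = norm (f' z - f' xs)"
    by (simp add: norm_blinfun.rep_eq minus_blinfun.rep_eq fun_diff_def)
  also have "\<dots> \<le> D" using d z by simp
  finally show "onorm (blinfun_apply (f' z) - blinfun_apply (f' xs)) \<le> D" .
next
  have "e > 0" using x by (metis ball_eq_empty empty_iff not_le)
  then show "xs \<in> ball xs e" by simp
qed

theorem theorem3p3:
  fixes f :: "'a::{real_inner,complete_space} \<Rightarrow> 'a"
    and f' :: "'a \<Rightarrow> 'a \<Rightarrow>\<^sub>L 'a"
    and U :: "'a set" and xs :: 'a and v :: "'a \<Rightarrow> 'a"
  assumes U_open: "open U" and xs_in: "xs \<in> U"
    and deriv: "\<And>x. x \<in> U \<Longrightarrow> (f has_derivative blinfun_apply (f' x)) (at x)"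
    and cont: "continuous_on U f'"
    and inv: "bij (blinfun_apply (f' xs))"
    and sol: "\<exists>x\<in>U. f x = 0"
    and v_def: "v = (\<lambda>x. blinfun_apply (f' xs) x)"
  shows "\<exists>\<epsilon>>0. ball xs \<epsilon> \<subseteq> U \<and> (\<exists>\<alpha>>0. \<forall>x\<in>ball xs \<epsilon>. \<forall>y\<in>ball xs \<epsilon>.
           inner (f x - f y) (v x - v y) \<ge> \<alpha> * (norm (x - y))\<^sup>2)"
proof -
  define A where "A = blinfun_apply (f' xs)"
  obtain c where c: "c > 0" "\<And>x. c * norm x \<le> norm (A x)"
  proof -
    have "bounded_linear (blinfun_apply (f' xs))" by (rule blinfun.bounded_linear_right)
    then show ?thesis using bounded_below[OF _ inv] that unfolding A_def by blast
  qed
  define \<delta> where "\<delta> = c / 2"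
  have \<delta>: "\<delta> > 0" using c by (simp add: \<delta>_def)
  have "isCont f' xs" using continuous_on_eq_continuous_at[OF U_open] cont xs_in by blast
  then have "\<forall>e>0. \<exists>d>0. \<forall>z. dist z xs < d \<longrightarrow> dist (f' z) (f' xs) < e"
    by (simp only: continuous_at_eps_delta)
  then obtain d where d: "d > 0" "\<And>z. dist z xs < d \<Longrightarrow> dist (f' z) (f' xs) < \<delta>"
    using \<delta> by blast
  obtain e where e: "e > 0" "ball xs e \<subseteq> U" using U_open xs_in open_contains_ball by blast
  define \<epsilon> where "\<epsilon> = min d e"
  have \<epsilon>: "\<epsilon> > 0" "ball xs \<epsilon> \<subseteq> U" using d e by (auto simp: \<epsilon>_def)
  have key: "inner (f x - f y) (v x - v y) \<ge> (c^2/2) * (norm (x - y))\<^sup>2"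
    if x: "x \<in> ball xs \<epsilon>" and y: "y \<in> ball xs \<epsilon>" for x y
  proof -
    have lb: "norm (f x - f y - A (x - y)) \<le> norm (x - y) * \<delta>"
      unfolding A_def
    proof (rule lbx[where e="\<epsilon>" and xs=xs and f=f and f'=f' and x=x and y=y and D=\<delta>])
      show "(f has_derivative blinfun_apply (f' z)) (at z)" if "z \<in> ball xs \<epsilon>" for z
      proof -
        have "z \<in> U" using that \<epsilon>(2) by (rule subsetD[rotated])
        then show ?thesis by (rule deriv)
      qed
      show "norm (f' z - f' xs) \<le> \<delta>" if z: "z \<in> ball xs \<epsilon>" for z
      proof -
        have "dist z xs < d" using z by (simp add: \<epsilon>_def dist_commute)
        then have "dist (f' z) (f' xs) < \<delta>" by (rule d(2))
        then show ?thesis by (simp add: dist_norm)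
      qed
      show "x \<in> ball xs \<epsilon>" by (rule x)
      show "y \<in> ball xs \<epsilon>" by (rule y)
    qed
    define h where "h = x - y"
    define r where "r = f x - f y - A h"
    have vh: "v x - v y = A h" by (simp add: v_def A_def h_def blinfun.diff_right)
    have "inner (f x - f y) (v x - v y) = inner (A h + r) (A h)" by (simp add: vh r_def)
    also have "\<dots> = (norm (A h))\<^sup>2 + inner r (A h)" by (simp add: inner_add_left power2_norm_eq_inner)
    also have "\<dots> \<ge> (norm (A h))\<^sup>2 - norm r * norm (A h)"
      using Cauchy_Schwarz_ineq2[of r "A h"] by linarith
    finally have i1: "inner (f x - f y) (v x - v y) \<ge> (norm (A h))\<^sup>2 - norm r * norm (A h)" .
    have "norm r * norm (A h) \<le> (norm h * \<delta>) * norm (A h)"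
      using lb by (simp add: r_def h_def mult_right_mono)
    with i1 have i2: "inner (f x - f y) (v x - v y) \<ge> (norm (A h))\<^sup>2 - (norm h * \<delta>) * norm (A h)"
      by linarith
    have ca: "c * norm h \<le> norm (A h)" using c(2) .
    have "(norm (A h))\<^sup>2 - (norm h * \<delta>) * norm (A h) - (c^2/2) * (norm h)\<^sup>2
          = (norm (A h) - c * norm h) * (norm (A h) + c * norm h / 2)"
      by (simp add: \<delta>_def power2_eq_square field_simps)
    also have "\<dots> \<ge> 0" using ca c(1) by (intro mult_nonneg_nonneg) auto
    finally show ?thesis using i2 by (simp add: h_def)
  qed
  have "c^2/2 > 0" using c by simp
  then show ?thesis using \<epsilon> key by blast
qed

end
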